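(* Let $G$ be a weakly-reversible chemical reaction network in $s$ species that is not catalytic. Then $V_{\mathbb{R}}(\mathcal{E}_G)\cap\mathbb{R}^s_{>0}$ is dense, in the Euclidean topology, in $V_{\mathbb{R}}(\mathcal{E}_G)\cap\mathbb{R}^s_{\ge0}$.
   Context: A chemical reaction network (CRN) consists of positive integers $s,n$, a finite directed graph $G$ with vertex set $\{1,\dots,n\}$ and edge set $E(G)$, and an injective labeling of vertex $i$ by a monic monomial $\psi_i=\prod_{j=1}^s x_j^{y_{ij}}$. $G$ is weakly-reversible iff each connected component is strongly connected. The associated event-system $\mathcal{E}_G$ is the set of binomials $\psi_i-\psi_j$, one for each pair $\{i,j\}$ with $(i,j)\in E(G)$ or $(j,i)\in E(G)$; $V_{\mathbb{R}}(\mathcal{E}_G)$ is its real zero set in $\mathbb{R}^s$. The event-graph $\overline{G}$ has as vertices all monic monomials in $x_1,\dots,x_s$, with an edge $(N\psi_i,N\psi_j)$ for each $(i,j)\in E(G)$ and each monic monomial $N$. A weakly-reversible CRN is catalytic iff there exist monic monomials $M,N$ path-connected in $\overline{G}$ such that $M/\gcd(M,N)$ and $N/\gcd(M,N)$ are not path-connected in $\overline{G}$. *)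

theory Defs
  imports "HOL-Analysis.Analysis"
begin

(* Species are indexed by a finite type 's (so s = CARD('s) >= 1).
   A monic monomial x^a is represented by its exponent vector a :: 's => nat.
   A CRN is given by n :: nat, an edge set E on vertices {1..n}, and a
   labeling y :: nat => ('s => nat) (vertex i is labelled by x^(y i)). *)

definition is_CRN :: "nat \<Rightarrow> (nat \<times> nat) set \<Rightarrow> (nat \<Rightarrow> ('s \<Rightarrow> nat)) \<Rightarrow> bool" where
  "is_CRN n E y \<longleftrightarrow> n \<ge> 1 \<and> E \<subseteq> {1..n} \<times> {1..n} \<and> inj_on y {1..n}"

definition weakly_reversible :: "nat \<Rightarrow> (nat \<times> nat) set \<Rightarrow> bool" where
  "weakly_reversible n E \<longleftrightarrow>
     (\<forall>i\<in>{1..n}. \<forall>j\<in>{1..n}. (i, j) \<in> (E \<union> E\<inverse>)\<^sup>* \<longrightarrow> (i, j) \<in> E\<^sup>*)"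

definition monom_eval :: "('s::finite \<Rightarrow> nat) \<Rightarrow> real ^ 's \<Rightarrow> real" where
  "monom_eval a x = (\<Prod>k\<in>UNIV. (x $ k) ^ a k)"

definition event_variety :: "(nat \<times> nat) set \<Rightarrow> (nat \<Rightarrow> ('s::finite \<Rightarrow> nat)) \<Rightarrow> (real ^ 's) set" where
  "event_variety E y = {x. \<forall>(i, j)\<in>E. monom_eval (y i) x - monom_eval (y j) x = 0}"

(* edges of the event graph: (N * psi_i, N * psi_j) for (i,j) in E and every monic monomial N *)
definition event_edges :: "(nat \<times> nat) set \<Rightarrow> (nat \<Rightarrow> ('s \<Rightarrow> nat)) \<Rightarrow> (('s \<Rightarrow> nat) \<times> ('s \<Rightarrow> nat)) set" where
  "event_edges E y = {(\<lambda>k. N k + y i k, \<lambda>k. N k + y j k) | N i j. (i, j) \<in> E}"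

definition event_connected :: "(nat \<times> nat) set \<Rightarrow> (nat \<Rightarrow> ('s \<Rightarrow> nat)) \<Rightarrow> ('s \<Rightarrow> nat) \<Rightarrow> ('s \<Rightarrow> nat) \<Rightarrow> bool" where
  "event_connected E y M N \<longleftrightarrow> (M, N) \<in> (event_edges E y \<union> (event_edges E y)\<inverse>)\<^sup>*"

(* M / gcd(M,N) on exponent vectors *)
definition monom_quot_gcd :: "('s \<Rightarrow> nat) \<Rightarrow> ('s \<Rightarrow> nat) \<Rightarrow> ('s \<Rightarrow> nat)" where
  "monom_quot_gcd M N = (\<lambda>k. M k - min (M k) (N k))"

definition catalytic :: "nat \<Rightarrow> (nat \<times> nat) set \<Rightarrow> (nat \<Rightarrow> ('s \<Rightarrow> nat)) \<Rightarrow> bool" where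
  "catalytic n E y \<longleftrightarrow> weakly_reversible n E \<and>
     (\<exists>M N. event_connected E y M N \<and>
        \<not> event_connected E y (monom_quot_gcd M N) (monom_quot_gcd N M))"

end

theory Submission
  imports Defs
begin


lemma conn_refl: "event_connected E y M M"
  by (simp add: event_connected_def)

lemma conn_sym: "event_connected E y M N \<Longrightarrow> event_connected E y N M"
  unfolding event_connected_def
  by (metis converse_Un converse_converse rtrancl_converse sup_commute converseI rtrancl_converseI)

lemma conn_trans: "event_connected E y M N \<Longrightarrow> event_connected E y N P \<Longrightarrow> event_connected E y M P"
  unfolding event_connected_def by (meson rtrancl_trans)

lemma edges_shift:
  assumes "(M, N) \<in> event_edges E y \<union> (event_edges E y)\<inverse>"
  shows "((\<lambda>k. M k + A k), (\<lambda>k. N k + A k)) \<in> event_edges E y \<union> (event_edges E y)\<inverse>"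
proof -
  from assms consider (a) "(M,N) \<in> event_edges E y" | (b) "(N,M) \<in> event_edges E y" by auto
  then show ?thesis
  proof cases
    case a
    then obtain Nn i j where e: "M = (\<lambda>k. Nn k + y i k)" "N = (\<lambda>k. Nn k + y j k)" "(i,j)\<in>E"
      unfolding event_edges_def by blast
    have "((\<lambda>k. M k + A k), (\<lambda>k. N k + A k)) \<in> event_edges E y"
      unfolding event_edges_def using e
      by (intro CollectI exI[of _ "\<lambda>k. Nn k + A k"] exI[of _ i] exI[of _ j]) (auto simp: algebra_simps)
    then show ?thesis by blast
  next
    case b
    then obtain Nn i j where e: "N = (\<lambda>k. Nn k + y i k)" "M = (\<lambda>k. Nn k + y j k)" "(i,j)\<in>E"
      unfolding event_edges_def by blast
    have "((\<lambda>k. N k + A k), (\<lambda>k. M k + A k)) \<in> event_edges E y"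
      unfolding event_edges_def using e
      by (intro CollectI exI[of _ "\<lambda>k. Nn k + A k"] exI[of _ i] exI[of _ j]) (auto simp: algebra_simps)
    then show ?thesis by blast
  qed
qed

lemma conn_shift:
  assumes "event_connected E y M N"
  shows "event_connected E y (\<lambda>k. M k + A k) (\<lambda>k. N k + A k)"
  using assms unfolding event_connected_def
proof (induction rule: rtrancl_induct)
  case base then show ?case by simp
next
  case (step N P)
  then show ?case using edges_shift[OF step(2), of A]
    by (meson rtrancl.rtrancl_into_rtrancl)
qed

definition Rst :: "(nat \<times> nat) set \<Rightarrow> (nat \<Rightarrow> ('s \<Rightarrow> nat)) \<Rightarrow> ('s \<Rightarrow> nat) \<Rightarrow> ('s \<Rightarrow> nat) \<Rightarrow> bool" where
  "Rst E y P Q \<longleftrightarrow> (\<exists>W. event_connected E y (\<lambda>k. P k + W k) (\<lambda>k. Q k + W k))"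

lemma Rst_refl: "Rst E y P P"
  unfolding Rst_def using conn_refl by blast

lemma Rst_sym: "Rst E y P Q \<Longrightarrow> Rst E y Q P"
  unfolding Rst_def using conn_sym by blast

lemma Rst_add:
  assumes "Rst E y P Q" "Rst E y P' Q'"
  shows "Rst E y (\<lambda>k. P k + P' k) (\<lambda>k. Q k + Q' k)"
proof -
  obtain W where W: "event_connected E y (\<lambda>k. P k + W k) (\<lambda>k. Q k + W k)" using assms(1) Rst_def by blast
  obtain W' where W': "event_connected E y (\<lambda>k. P' k + W' k) (\<lambda>k. Q' k + W' k)" using assms(2) Rst_def by blast
  have 1: "event_connected E y (\<lambda>k. (P k + P' k) + (W k + W' k)) (\<lambda>k. (Q k + P' k) + (W k + W' k))"
    using conn_shift[OF W, of "\<lambda>k. P' k + W' k"] by (simp add: algebra_simps)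
  have 2: "event_connected E y (\<lambda>k. (Q k + P' k) + (W k + W' k)) (\<lambda>k. (Q k + Q' k) + (W k + W' k))"
    using conn_shift[OF W', of "\<lambda>k. Q k + W k"] by (simp add: algebra_simps)
  show ?thesis unfolding Rst_def using conn_trans[OF 1 2] by (intro exI[of _ "\<lambda>k. W k + W' k"]) simp
qed

lemma Rst_edge: "(i,j) \<in> E \<Longrightarrow> Rst E y (y i) (y j)"
proof -
  assume e: "(i,j) \<in> E"
  have "(y i, y j) \<in> event_edges E y"
    unfolding event_edges_def using e
    by (intro CollectI exI[of _ "\<lambda>k. 0"] exI[of _ i] exI[of _ j]) auto
  then have "event_connected E y (y i) (y j)" unfolding event_connected_def by blast
  then show ?thesis unfolding Rst_def by (intro exI[of _ "\<lambda>k. 0"]) simp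
qed

lemma Rst_mult: "(i,j) \<in> E \<Longrightarrow> Rst E y (\<lambda>k. c * y i k) (\<lambda>k. c * y j k)"
proof (induction c)
  case 0 then show ?case using Rst_refl[of E y "\<lambda>k. 0"] by simp
next
  case (Suc c)
  then show ?case using Rst_add[OF Suc.IH[OF Suc.prems] Rst_edge[OF Suc.prems]] by (simp add: algebra_simps)
qed

definition dz :: "(nat \<Rightarrow> ('s \<Rightarrow> nat)) \<Rightarrow> nat \<times> nat \<Rightarrow> 's \<Rightarrow> int" where
  "dz y e k = int (y (fst e) k) - int (y (snd e) k)"

lemma Dgroup:
  assumes "finite F" "F \<subseteq> E"
  shows "\<exists>P Q. Rst E y P Q \<and> (\<forall>k. (\<Sum>e\<in>F. c e * dz y e k) = int (P k) - int (Q k))"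
  using assms
proof (induction F rule: finite_induct)
  case empty
  then show ?case using Rst_refl[of E y "\<lambda>k. 0"] by (intro exI[of _ "\<lambda>k. 0"]) auto
next
  case (insert e F)
  then obtain P Q where PQ: "Rst E y P Q" "\<forall>k. (\<Sum>e\<in>F. c e * dz y e k) = int (P k) - int (Q k)" by auto
  obtain i j where e: "e = (i,j)" by force
  with insert have eE: "(i,j) \<in> E" by auto
  show ?case
  proof (cases "c e \<ge> 0")
    case True
    let ?m = "nat (c e)"
    have "Rst E y (\<lambda>k. P k + ?m * y i k) (\<lambda>k. Q k + ?m * y j k)"
      using Rst_add[OF PQ(1) Rst_mult[OF eE]] .
    moreover have "\<forall>k. (\<Sum>e\<in>insert e F. c e * dz y e k) = int (P k + ?m * y i k) - int (Q k + ?m * y j k)"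
      using PQ(2) insert True e by (auto simp: dz_def algebra_simps)
    ultimately show ?thesis by blast
  next
    case False
    let ?m = "nat (- c e)"
    have "Rst E y (\<lambda>k. P k + ?m * y j k) (\<lambda>k. Q k + ?m * y i k)"
      using Rst_add[OF PQ(1) Rst_sym[OF Rst_mult[OF eE]]] .
    moreover have "\<forall>k. (\<Sum>e\<in>insert e F. c e * dz y e k) = int (P k + ?m * y j k) - int (Q k + ?m * y i k)"
      using PQ(2) insert False e by (auto simp: dz_def algebra_simps)
    ultimately show ?thesis by blast
  qed
qed

lemma conn_eval:
  assumes "event_connected E y M N" "x \<in> event_variety E y"
  shows "monom_eval M x = monom_eval N x"
proof -
  have edge: "monom_eval M x = monom_eval N x" if "(M, N) \<in> event_edges E y" for M N
  proof -
    from that obtain Nn i j where e: "M = (\<lambda>k. Nn k + y i k)" "N = (\<lambda>k. Nn k + y j k)" "(i,j)\<in>E"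
      unfolding event_edges_def by blast
    have "monom_eval (y i) x = monom_eval (y j) x" using assms(2) e(3) unfolding event_variety_def by auto
    then show ?thesis unfolding e monom_eval_def by (simp add: power_add prod.distrib)
  qed
  show ?thesis using assms(1) unfolding event_connected_def
  proof (induction rule: rtrancl_induct)
    case base then show ?case by simp
  next
    case (step N P)
    then show ?case using edge[of N P] edge[of P N] by auto
  qed
qed



definition NC :: "(nat \<times> nat) set \<Rightarrow> (nat \<Rightarrow> ('s \<Rightarrow> nat)) \<Rightarrow> bool" where
  "NC E y \<longleftrightarrow> (\<forall>M N. event_connected E y M N \<longrightarrow>
        event_connected E y (monom_quot_gcd M N) (monom_quot_gcd N M))"

lemma monom_eval_exp:
  fixes x :: "real ^ 's::finite"
  assumes "\<forall>k. x$k \<ge> 0" "\<forall>k. x$k = 0 \<longrightarrow> a k = 0"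
  shows "monom_eval a x = exp (\<Sum>k\<in>UNIV. real (a k) * ln (x$k))"
  unfolding monom_eval_def exp_sum[OF finite]
proof (rule prod.cong[OF refl])
  fix k
  show "x $ k ^ a k = exp (real (a k) * ln (x $ k))"
  proof (cases "x$k = 0")
    case True then show ?thesis using assms(2) by simp
  next
    case False
    have "x$k \<ge> 0" using assms(1) by simp
    then have "x$k > 0" using False by linarith
    then show ?thesis by (metis exp_ln exp_of_nat_mult)
  qed
qed

lemma int_prop:
  fixes x :: "real ^ 's::finite"
  assumes fin: "finite E" and nc: "NC E y" and xV: "x \<in> event_variety E y" and xnn: "\<forall>k. x$k \<ge> 0"
    and U: "\<forall>k. x$k = 0 \<longrightarrow> (\<Sum>e\<in>E. c e * dz y e k) \<ge> 0"
  shows "(\<forall>k. x$k = 0 \<longrightarrow> (\<Sum>e\<in>E. c e * dz y e k) = 0)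
       \<and> (\<Sum>k\<in>UNIV. real_of_int (\<Sum>e\<in>E. c e * dz y e k) * ln (x$k)) = 0"
proof -
  define u where "u k = (\<Sum>e\<in>E. c e * dz y e k)" for k
  obtain P Q where PQ: "Rst E y P Q" "\<forall>k. u k = int (P k) - int (Q k)"
    using Dgroup[OF fin subset_refl, of y c] unfolding u_def by blast
  obtain W where W: "event_connected E y (\<lambda>k. P k + W k) (\<lambda>k. Q k + W k)" using PQ(1) Rst_def by blast
  have q1: "monom_quot_gcd (\<lambda>k. P k + W k) (\<lambda>k. Q k + W k) = (\<lambda>k. nat (u k))"
    unfolding monom_quot_gcd_def using PQ(2) by (auto simp: fun_eq_iff)
  have q2: "monom_quot_gcd (\<lambda>k. Q k + W k) (\<lambda>k. P k + W k) = (\<lambda>k. nat (- u k))"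
    unfolding monom_quot_gcd_def using PQ(2) by (auto simp: fun_eq_iff)
  have c: "event_connected E y (\<lambda>k. nat (u k)) (\<lambda>k. nat (- u k))"
    using nc W unfolding NC_def q1[symmetric] q2[symmetric] by blast
  have ev: "monom_eval (\<lambda>k. nat (u k)) x = monom_eval (\<lambda>k. nat (- u k)) x"
    using conn_eval[OF c xV] .
  have rhs: "monom_eval (\<lambda>k. nat (- u k)) x = exp (\<Sum>k\<in>UNIV. real (nat (- u k)) * ln (x$k))"
    using monom_eval_exp[OF xnn] U unfolding u_def by simp
  have "monom_eval (\<lambda>k. nat (u k)) x \<noteq> 0" using ev rhs by simp
  then have "\<forall>k. x $ k ^ nat (u k) \<noteq> 0" unfolding monom_eval_def by simp
  then have z: "\<forall>k. x$k = 0 \<longrightarrow> u k = 0"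
  proof (intro allI impI)
    fix k assume nz: "\<forall>k. x $ k ^ nat (u k) \<noteq> 0" and k0: "x$k = 0"
    then have "nat (u k) = 0" by (metis power_0_left)
    moreover have "u k \<ge> 0" using U k0 unfolding u_def by simp
    ultimately show "u k = 0" by simp
  qed
  have lhs: "monom_eval (\<lambda>k. nat (u k)) x = exp (\<Sum>k\<in>UNIV. real (nat (u k)) * ln (x$k))"
    using monom_eval_exp[OF xnn] z by simp
  have "(\<Sum>k\<in>UNIV. real (nat (u k)) * ln (x$k)) = (\<Sum>k\<in>UNIV. real (nat (- u k)) * ln (x$k))"
    using ev lhs rhs by simp
  then have "(\<Sum>k\<in>UNIV. (real (nat (u k)) - real (nat (- u k))) * ln (x$k)) = 0"
    by (simp add: left_diff_distrib sum_subtractf)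
  moreover have "\<And>k. real (nat (u k)) - real (nat (- u k)) = real_of_int (u k)" by simp
  ultimately show ?thesis using z unfolding u_def by simp
qed



definition dv :: "(nat \<Rightarrow> ('s \<Rightarrow> nat)) \<Rightarrow> nat \<times> nat \<Rightarrow> real ^ 's" where
  "dv y e = (\<chi> k. real (y (fst e) k) - real (y (snd e) k))"

definition QS :: "(nat \<times> nat) set \<Rightarrow> (nat \<Rightarrow> ('s \<Rightarrow> nat)) \<Rightarrow> (real ^ 's) set" where
  "QS E y = {(\<Sum>e\<in>E. q e *\<^sub>R dv y e) | q. \<forall>e\<in>E. q e \<in> \<rat>}"

lemma QS_coord: "u \<in> QS E y \<Longrightarrow> u $ k \<in> \<rat>"
  unfolding QS_def dv_def by (auto intro!: Rats_sum)

lemma QS_lin: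
  assumes "u \<in> QS E y" "w \<in> QS E y" "r \<in> \<rat>"
  shows "u - r *\<^sub>R w \<in> QS E y"
proof -
  obtain q where q: "u = (\<Sum>e\<in>E. q e *\<^sub>R dv y e)" "\<forall>e\<in>E. q e \<in> \<rat>" using assms(1) QS_def by blast
  obtain p where p: "w = (\<Sum>e\<in>E. p e *\<^sub>R dv y e)" "\<forall>e\<in>E. p e \<in> \<rat>" using assms(2) QS_def by blast
  have "u - r *\<^sub>R w = (\<Sum>e\<in>E. (q e - r * p e) *\<^sub>R dv y e)"
    unfolding q p by (simp add: scaleR_sum_right sum_subtractf[symmetric] algebra_simps)
  moreover have "\<forall>e\<in>E. q e - r * p e \<in> \<rat>" using q p assms(3) by simp
  ultimately show ?thesis unfolding QS_def by (intro CollectI exI[of _ "\<lambda>e. q e - r * p e"]) simp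
qed

lemma span_repr:
  assumes "v \<in> span (dv y ` E)" "finite E"
  shows "\<exists>c. v = (\<Sum>e\<in>E. c e *\<^sub>R dv y e)"
proof -
  let ?T = "{(\<Sum>e\<in>E. c e *\<^sub>R dv y e) | c. True}"
  have sub: "subspace ?T"
    unfolding subspace_def
  proof (intro conjI ballI allI)
    show "0 \<in> ?T" by (intro CollectI exI[of _ "\<lambda>e. 0"]) simp
  next
    fix a b assume "a \<in> ?T" "b \<in> ?T"
    then obtain c d where "a = (\<Sum>e\<in>E. c e *\<^sub>R dv y e)" "b = (\<Sum>e\<in>E. d e *\<^sub>R dv y e)" by blast
    then have "a + b = (\<Sum>e\<in>E. (c e + d e) *\<^sub>R dv y e)" by (simp add: sum.distrib scaleR_add_left)
    then show "a + b \<in> ?T" by (intro CollectI exI[of _ "\<lambda>e. c e + d e"]) simp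
  next
    fix r a assume "a \<in> ?T"
    then obtain c where "a = (\<Sum>e\<in>E. c e *\<^sub>R dv y e)" by blast
    then have "r *\<^sub>R a = (\<Sum>e\<in>E. (r * c e) *\<^sub>R dv y e)" by (simp add: scaleR_sum_right)
    then show "r *\<^sub>R a \<in> ?T" by (intro CollectI exI[of _ "\<lambda>e. r * c e"]) simp
  qed
  have "dv y ` E \<subseteq> ?T"
  proof
    fix d assume "d \<in> dv y ` E"
    then obtain e0 where e0: "e0 \<in> E" "d = dv y e0" by blast
    have "(\<Sum>e\<in>E. (if e = e0 then 1 else 0) *\<^sub>R dv y e) = dv y e0"
      using assms(2) e0(1) by (simp add: if_distrib[of "\<lambda>t. t *\<^sub>R _"] sum.delta cong: if_cong)
    then show "d \<in> ?T" using e0 by (intro CollectI exI[of _ "\<lambda>e. if e = e0 then 1 else 0"]) simp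
  qed
  then have "span (dv y ` E) \<subseteq> ?T" using sub by (simp add: span_minimal)
  then show ?thesis using assms by blast
qed

lemma common_denom:
  assumes "finite F" "\<forall>e\<in>F. q e \<in> \<rat>"
  shows "\<exists>m::nat. m > 0 \<and> (\<forall>e\<in>F. real m * q e \<in> \<int>)"
  using assms
proof (induction F rule: finite_induct)
  case empty then show ?case by (intro exI[of _ 1]) simp
next
  case (insert e F)
  then obtain m where m: "m > 0" "\<forall>e\<in>F. real m * q e \<in> \<int>" by auto
  from insert have "q e \<in> \<rat>" by simp
  then obtain a b where ab: "b > 0" "q e = of_int a / of_int b" using Rats_cases' by metis
  let ?m = "m * nat b"
  have "real ?m * q e = real m * of_int a" using ab by simp
  then have 1: "real ?m * q e \<in> \<int>" by (simp only:) (intro Ints_mult Ints_of_nat Ints_of_int)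
  have 2: "real ?m * q e' \<in> \<int>" if "e' \<in> F" for e'
  proof -
    have "real ?m * q e' = of_int b * (real m * q e')" using ab by simp
    moreover have "real m * q e' \<in> \<int>" using m(2) that by simp
    ultimately show ?thesis by (metis Ints_mult Ints_of_int)
  qed
  show ?case using 1 2 m ab by (intro exI[of _ ?m]) auto
qed



lemma vsum_nth: "(sum f S) $ k = (\<Sum>x\<in>S. f x $ k)"
  by (subst sum_eq) simp

lemma approx_base:
  assumes fin: "finite E" and eps: "\<epsilon> > 0"
  shows "\<exists>u\<in>QS E y. norm (u - (\<Sum>e\<in>E. c e *\<^sub>R dv y e)) < \<epsilon>"
proof -
  define B where "B = (\<Sum>e\<in>E. norm (dv y e)) + 1"
  have B0: "B > 0" unfolding B_def by (simp add: add_nonneg_pos sum_nonneg)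
  define \<delta> where "\<delta> = \<epsilon> / B"
  have d0: "\<delta> > 0" unfolding \<delta>_def using eps B0 by simp
  have "\<forall>e. \<exists>r. r \<in> \<rat> \<and> c e < r \<and> r < c e + \<delta>"
    using Rats_dense_in_real d0 by (metis less_add_same_cancel1)
  then obtain q where q: "\<forall>e. q e \<in> \<rat> \<and> c e < q e \<and> q e < c e + \<delta>"
    using choice[of "\<lambda>e r. r \<in> \<rat> \<and> c e < r \<and> r < c e + \<delta>"] by blast
  let ?u = "\<Sum>e\<in>E. q e *\<^sub>R dv y e"
  have uQ: "?u \<in> QS E y" unfolding QS_def using q by blast
  have "norm (?u - (\<Sum>e\<in>E. c e *\<^sub>R dv y e)) = norm (\<Sum>e\<in>E. (q e - c e) *\<^sub>R dv y e)"
    by (simp add: sum_subtractf[symmetric] scaleR_diff_left)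
  also have "\<dots> \<le> (\<Sum>e\<in>E. norm ((q e - c e) *\<^sub>R dv y e))" by (rule norm_sum)
  also have "\<dots> = (\<Sum>e\<in>E. \<bar>q e - c e\<bar> * norm (dv y e))" by simp
  also have "\<dots> \<le> (\<Sum>e\<in>E. \<delta> * norm (dv y e))"
  proof (intro sum_mono mult_right_mono)
    fix e
    have "c e < q e" "q e < c e + \<delta>" using spec[OF q, of e] by auto
    then show "\<bar>q e - c e\<bar> \<le> \<delta>" by (simp add: abs_le_iff)
  qed simp
  also have "\<dots> = \<delta> * (B - 1)" unfolding B_def by (simp add: sum_distrib_left)
  also have "\<dots> < \<delta> * B" using d0 by simp
  also have "\<dots> = \<epsilon>" unfolding \<delta>_def using B0 by simp
  finally show ?thesis using uQ by blast
qed

lemma approx_zero: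
  assumes fin: "finite E" and v: "v = (\<Sum>e\<in>E. c e *\<^sub>R dv y e)" and Z0: "finite Z0"
  shows "(\<forall>k\<in>Z0. v$k = 0) \<longrightarrow> (\<forall>\<epsilon>>0. \<exists>u\<in>QS E y. (\<forall>k\<in>Z0. u$k = 0) \<and> norm (u - v) < \<epsilon>)"
  using Z0
proof (induction Z0 rule: finite_induct)
  case empty
  then show ?case using approx_base[OF fin, of _ y c] v by auto
next
  case (insert k Z0)
  show ?case
  proof (intro impI allI)
    fix \<epsilon> :: real
    assume vz: "\<forall>j\<in>insert k Z0. v $ j = 0" and eps: "0 < \<epsilon>"
    have IH: "\<forall>\<epsilon>>0. \<exists>u\<in>QS E y. (\<forall>k\<in>Z0. u$k = 0) \<and> norm (u - v) < \<epsilon>"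
      using insert.IH vz by simp
    show "\<exists>u\<in>QS E y. (\<forall>k\<in>insert k Z0. u $ k = 0) \<and> norm (u - v) < \<epsilon>"
    proof (cases "\<exists>u0\<in>QS E y. (\<forall>j\<in>Z0. u0$j = 0) \<and> u0$k \<noteq> 0")
      case False
      then show ?thesis using IH eps by blast
    next
      case True
      then obtain u0 where u0: "u0 \<in> QS E y" "\<forall>j\<in>Z0. u0$j = 0" "u0$k \<noteq> 0" by blast
      define a where "a = \<bar>u0$k\<bar>"
      have a0: "a > 0" unfolding a_def using u0(3) by simp
      define K where "K = 1 + norm u0 / a"
      have K0: "K > 0" unfolding K_def using a0 by (simp add: add_pos_nonneg)
      define \<delta> where "\<delta> = \<epsilon> / K"
      have d0: "\<delta> > 0" unfolding \<delta>_def using eps K0 by simp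
      obtain w where w: "w \<in> QS E y" "\<forall>j\<in>Z0. w$j = 0" "norm (w - v) < \<delta>" using IH d0 by blast
      define r where "r = w$k / u0$k"
      have rQ: "r \<in> \<rat>" unfolding r_def using QS_coord[OF w(1)] QS_coord[OF u0(1)] by simp
      define u where "u = w - r *\<^sub>R u0"
      have uQ: "u \<in> QS E y" unfolding u_def using QS_lin[OF w(1) u0(1) rQ] .
      have uz: "\<forall>j\<in>insert k Z0. u$j = 0"
        unfolding u_def r_def using w(2) u0(2,3) by auto
      have wk: "\<bar>w$k\<bar> \<le> norm (w - v)"
        using component_le_norm_cart[of "w - v" k] vz by simp
      have "norm (u - v) = norm ((w - v) - r *\<^sub>R u0)" unfolding u_def by (simp add: algebra_simps)
      also have "\<dots> \<le> norm (w - v) + \<bar>r\<bar> * norm u0" using norm_triangle_ineq4[of "w - v" "r *\<^sub>R u0"] by simp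
      also have "\<bar>r\<bar> = \<bar>w$k\<bar> / a" unfolding r_def a_def by (simp add: abs_divide)
      also have "norm (w - v) + \<bar>w$k\<bar> / a * norm u0 \<le> norm (w - v) + norm (w - v) / a * norm u0"
        using wk a0 by (intro add_left_mono mult_right_mono divide_right_mono) auto
      also have "\<dots> = norm (w - v) * K" unfolding K_def by (simp add: algebra_simps)
      also have "\<dots> < \<delta> * K" using w(3) K0 by (intro mult_strict_right_mono) auto
      also have "\<dots> = \<epsilon>" unfolding \<delta>_def using K0 by simp
      finally show ?thesis using uQ uz by blast
    qed
  qed
qed

lemma Ints_floor_eq: "z \<in> \<int> \<Longrightarrow> real_of_int \<lfloor>z\<rfloor> = z"
  by (metis Ints_cases floor_of_int)

lemma QS_prop:
  fixes x :: "real ^ 's::finite"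
  assumes fin: "finite E" and nc: "NC E y" and xV: "x \<in> event_variety E y" and xnn: "\<forall>k. x$k \<ge> 0"
    and uQ: "u \<in> QS E y" and un: "\<forall>k. x$k = 0 \<longrightarrow> u$k \<ge> 0"
  shows "(\<forall>k. x$k = 0 \<longrightarrow> u$k = 0) \<and> inner (\<chi> k. ln (x$k)) u = 0"
proof -
  obtain q where q: "u = (\<Sum>e\<in>E. q e *\<^sub>R dv y e)" "\<forall>e\<in>E. q e \<in> \<rat>" using uQ QS_def by blast
  obtain m :: nat where m: "m > 0" "\<forall>e\<in>E. real m * q e \<in> \<int>" using common_denom[OF fin q(2)] by blast
  define c where "c e = \<lfloor>real m * q e\<rfloor>" for e
  have ce: "\<forall>e\<in>E. real_of_int (c e) = real m * q e" unfolding c_def using m(2) Ints_floor_eq by blast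
  have key: "real_of_int (\<Sum>e\<in>E. c e * dz y e k) = real m * u$k" for k
  proof -
    have "real_of_int (\<Sum>e\<in>E. c e * dz y e k) = (\<Sum>e\<in>E. real m * (q e * dv y e $ k))"
      unfolding of_int_sum using ce by (intro sum.cong) (auto simp: dz_def dv_def)
    also have "\<dots> = real m * u$k" unfolding q(1) vsum_nth by (simp add: sum_distrib_left)
    finally show ?thesis .
  qed
  have hyp: "\<forall>k. x$k = 0 \<longrightarrow> (\<Sum>e\<in>E. c e * dz y e k) \<ge> 0"
  proof (intro allI impI)
    fix k assume "x$k = 0"
    then have "real m * u$k \<ge> 0" using un by simp
    then have "real_of_int (\<Sum>e\<in>E. c e * dz y e k) \<ge> 0" using key by simp
    then show "(\<Sum>e\<in>E. c e * dz y e k) \<ge> 0" by linarith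
  qed
  note ip = int_prop[OF fin nc xV xnn hyp]
  have 1: "\<forall>k. x$k = 0 \<longrightarrow> u$k = 0"
  proof (intro allI impI)
    fix k assume "x$k = 0"
    then have "real_of_int (\<Sum>e\<in>E. c e * dz y e k) = 0" using ip by simp
    then show "u$k = 0" using key m(1) by simp
  qed
  have "(\<Sum>k\<in>UNIV. (real m * u$k) * ln (x$k)) = 0" using ip key by simp
  then have "real m * (\<Sum>k\<in>UNIV. ln (x$k) * u$k) = 0"
    by (simp add: sum_distrib_left algebra_simps)
  then have "(\<Sum>k\<in>UNIV. ln (x$k) * u$k) = 0" using m(1) by simp
  then show ?thesis using 1 by (simp add: inner_vec_def)
qed



lemma span_prop:
  fixes x :: "real ^ 's::finite"
  assumes fin: "finite E" and nc: "NC E y" and xV: "x \<in> event_variety E y" and xnn: "\<forall>k. x$k \<ge> 0"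
    and vL: "v \<in> span (dv y ` E)" and vn: "\<forall>k. x$k = 0 \<longrightarrow> v$k \<ge> 0"
  shows "(\<forall>k. x$k = 0 \<longrightarrow> v$k = 0) \<and> inner (\<chi> k. ln (x$k)) v = 0"
proof -
  obtain c where v: "v = (\<Sum>e\<in>E. c e *\<^sub>R dv y e)" using span_repr[OF vL fin] by blast
  have z: "\<forall>k. x$k = 0 \<longrightarrow> v$k = 0"
  proof (rule ccontr)
    assume "\<not> (\<forall>k. x$k = 0 \<longrightarrow> v$k = 0)"
    then obtain k0 where k0: "x$k0 = 0" "v$k0 \<noteq> 0" by blast
    define Zp where "Zp = {k. x$k = 0 \<and> v$k > 0}"
    define Z0 where "Z0 = {k. x$k = 0 \<and> v$k = 0}"
    have k0Zp: "k0 \<in> Zp" unfolding Zp_def using k0 vn by (simp add: less_le)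
    define \<epsilon> where "\<epsilon> = Min ((\<lambda>k. v$k) ` Zp)"
    have eps: "\<epsilon> > 0" unfolding \<epsilon>_def using k0Zp by (subst Min_gr_iff) (auto simp: Zp_def)
    have epsle: "\<epsilon> \<le> v$k" if "k \<in> Zp" for k unfolding \<epsilon>_def using that by simp
    obtain u where u: "u \<in> QS E y" "\<forall>k\<in>Z0. u$k = 0" "norm (u - v) < \<epsilon>"
      using approx_zero[OF fin v, of Z0] eps unfolding Z0_def by auto
    have upos: "u$k > 0" if "k \<in> Zp" for k
    proof -
      have "\<bar>(u - v)$k\<bar> < \<epsilon>" using component_le_norm_cart[of "u - v" k] u(3) by linarith
      then show ?thesis using epsle[OF that] by simp
    qed
    have "\<forall>k. x$k = 0 \<longrightarrow> u$k \<ge> 0"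
    proof (intro allI impI)
      fix k assume xk: "x$k = 0"
      show "u$k \<ge> 0"
      proof (cases "v$k = 0")
        case True then show ?thesis using u(2) xk unfolding Z0_def by simp
      next
        case False then have "k \<in> Zp" using vn xk unfolding Zp_def by (simp add: less_le)
        then show ?thesis using upos by (simp add: less_imp_le)
      qed
    qed
    then have "u$k0 = 0" using QS_prop[OF fin nc xV xnn u(1)] k0 by blast
    then show False using upos[OF k0Zp] by simp
  qed
  define l where "l = (\<chi> k. ln (x$k))"
  have "inner l v = 0"
  proof (rule ccontr)
    assume ne: "inner l v \<noteq> 0"
    define \<epsilon> where "\<epsilon> = \<bar>inner l v\<bar> / (norm l + 1)"
    have eps: "\<epsilon> > 0" unfolding \<epsilon>_def using ne by (simp add: add_nonneg_pos)
    obtain u where u: "u \<in> QS E y" "\<forall>k\<in>{k. x$k = 0}. u$k = 0" "norm (u - v) < \<epsilon>"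
      using approx_zero[OF fin v, of "{k. x$k = 0}"] eps z by auto
    have "inner l u = 0" using QS_prop[OF fin nc xV xnn u(1)] u(2) unfolding l_def by simp
    then have "\<bar>inner l v\<bar> = \<bar>inner l (v - u)\<bar>" by (simp add: inner_diff_right)
    also have "\<dots> \<le> norm l * norm (v - u)" by (rule Cauchy_Schwarz_ineq2)
    also have "\<dots> \<le> norm l * \<epsilon>" using u(3) by (intro mult_left_mono) (auto simp: norm_minus_commute)
    also have "\<dots> < \<bar>inner l v\<bar>"
    proof -
      have A: "\<bar>inner l v\<bar> > 0" using ne by simp
      have "norm l * \<epsilon> = \<bar>inner l v\<bar> * (norm l / (norm l + 1))" unfolding \<epsilon>_def by simp
      also have "\<dots> < \<bar>inner l v\<bar> * 1" proof (rule mult_strict_left_mono)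
        have "norm l < norm l + 1" by simp
        then show "norm l / (norm l + 1) < 1" by (subst divide_less_eq_1_pos) (auto intro: add_nonneg_pos)
      qed (use A in auto)
      finally show ?thesis by simp
    qed
    finally show False by simp
  qed
  then show ?thesis using z unfolding l_def by simp
qed



lemma zero_subspace: "subspace {w :: real^'s::finite. \<forall>k\<in>A. w$k = 0}"
  unfolding subspace_def by auto

lemma span_axis_zero:
  assumes "v \<in> span ((\<lambda>k. axis k (1::real)) ` B)" "k \<notin> B"
  shows "v $ k = 0"
proof -
  have "span ((\<lambda>k. axis k (1::real)) ` B) \<subseteq> {w. \<forall>k\<in>-B. w$k = 0}"
    by (rule span_minimal) (auto simp: axis_def zero_subspace)
  then show ?thesis using assms by auto
qed

lemma subspace_lin_zero:
  assumes "subspace H" "\<forall>h\<in>H. inner a h > b"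
  shows "b < 0 \<and> (\<forall>h\<in>H. inner a h = 0)"
proof -
  have b: "b < 0" using assms subspace_0[OF assms(1)] by force
  have "inner a h = 0" if h: "h \<in> H" for h
  proof (rule ccontr)
    assume ne: "inner a h \<noteq> 0"
    let ?t = "(b - 1) / inner a h"
    have "?t *\<^sub>R h \<in> H" using subspace_scale[OF assms(1) h] .
    then have "inner a (?t *\<^sub>R h) > b" using assms(2) by blast
    moreover have "inner a (?t *\<^sub>R h) = b - 1" using ne by simp
    ultimately show False by simp
  qed
  then show ?thesis using b by blast
qed

lemma exists_c:
  fixes x :: "real ^ 's::finite"
  assumes fin: "finite E" and nc: "NC E y" and xV: "x \<in> event_variety E y" and xnn: "\<forall>k. x$k \<ge> 0"
  shows "\<exists>c. (\<forall>e\<in>E. inner c (dv y e) = 0) \<and> (\<forall>k. x$k \<noteq> 0 \<longrightarrow> c$k = 0) \<and> (\<forall>k. x$k = 0 \<longrightarrow> c$k > 0)"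
proof (cases "{k. x$k = 0} = {}")
  case True
  then show ?thesis by (intro exI[of _ 0]) auto
next
  case False
  define Z where "Z = {k. x$k = 0}"
  define H where "H = span (dv y ` E \<union> (\<lambda>k. axis k (1::real)) ` (-Z))"
  define C where "C = convex hull ((\<lambda>k. axis k (1::real)) ` Z)"
  define Ps where "Ps = {p :: real^'s. (\<forall>k. p$k \<ge> 0) \<and> (\<forall>k\<in>-Z. p$k = 0) \<and> (\<Sum>k\<in>UNIV. p$k) = 1}"
  have cPs: "convex Ps" unfolding convex_def Ps_def
  proof (intro ballI allI impI conjI)
    fix p q :: "real^'s" and u v :: real
    assume p: "p \<in> {p. (\<forall>k. p$k \<ge> 0) \<and> (\<forall>k\<in>-Z. p$k = 0) \<and> (\<Sum>k\<in>UNIV. p$k) = 1}"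
      and q: "q \<in> {p. (\<forall>k. p$k \<ge> 0) \<and> (\<forall>k\<in>-Z. p$k = 0) \<and> (\<Sum>k\<in>UNIV. p$k) = 1}"
      and uv: "0 \<le> u" "0 \<le> v" "u + v = 1"
    show "u *\<^sub>R p + v *\<^sub>R q \<in> {p. (\<forall>k. p$k \<ge> 0) \<and> (\<forall>k\<in>-Z. p$k = 0) \<and> (\<Sum>k\<in>UNIV. p$k) = 1}"
      using p q uv by (simp add: sum.distrib sum_distrib_left[symmetric])
  qed
  have axPs: "(\<lambda>k. axis k (1::real)) ` Z \<subseteq> Ps"
    unfolding Ps_def by (auto simp: axis_def)
  have CPs: "C \<subseteq> Ps" unfolding C_def by (rule hull_minimal[OF axPs]) (use cPs in simp)
  have disj: "C \<inter> H = {}"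
  proof (rule ccontr)
    assume "C \<inter> H \<noteq> {}"
    then obtain h where hC: "h \<in> Ps" and hH: "h \<in> H" using CPs by blast
    from hH obtain a b where ab: "h = a + b" "a \<in> span (dv y ` E)" "b \<in> span ((\<lambda>k. axis k (1::real)) ` (-Z))"
      unfolding H_def span_Un by blast
    have bz: "b$k = 0" if "k \<in> Z" for k using span_axis_zero[OF ab(3)] that by simp
    have "\<forall>k. x$k = 0 \<longrightarrow> a$k \<ge> 0"
    proof (intro allI impI)
      fix k assume "x$k = 0"
      then have "b$k = 0" using bz unfolding Z_def by simp
      moreover have "0 \<le> h$k" using hC unfolding Ps_def by simp
      ultimately show "a$k \<ge> 0" using ab(1) by simp
    qed
    then have az: "\<forall>k. x$k = 0 \<longrightarrow> a$k = 0" using span_prop[OF fin nc xV xnn ab(2)] by blast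
    have "\<forall>k. h$k = 0"
    proof
      fix k show "h$k = 0"
      proof (cases "k \<in> Z")
        case True then show ?thesis using az bz ab(1) unfolding Z_def by simp
      next
        case False then show ?thesis using hC unfolding Ps_def by simp
      qed
    qed
    then show False using hC unfolding Ps_def by simp
  qed
  have "\<exists>a b. (\<forall>p\<in>C. inner a p < b) \<and> (\<forall>h\<in>H. inner a h > b)"
  proof (rule separating_hyperplane_compact_closed)
    show "convex C" unfolding C_def by simp
    show "compact C" unfolding C_def by (intro compact_convex_hull finite_imp_compact) simp
    show "C \<noteq> {}" unfolding C_def using False Z_def by simp
    show "convex H" unfolding H_def by (simp add: subspace_imp_convex)
    show "closed H" unfolding H_def by simp
    show "C \<inter> H = {}" by (rule disj)
  qed
  then obtain a b where ab: "\<forall>p\<in>C. inner a p < b" "\<forall>h\<in>H. inner a h > b" by blast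
  from subspace_lin_zero[OF _ ab(2)] have b0: "b < 0" and aH: "\<forall>h\<in>H. inner a h = 0"
    unfolding H_def by auto
  define c where "c = - a"
  have "\<forall>e\<in>E. inner c (dv y e) = 0" using aH unfolding c_def H_def by (auto intro: span_base)
  moreover have "\<forall>k. x$k \<noteq> 0 \<longrightarrow> c$k = 0"
  proof (intro allI impI)
    fix k assume "x$k \<noteq> 0"
    then have "axis k 1 \<in> H" unfolding H_def Z_def by (auto intro: span_base)
    then have "inner a (axis k 1) = 0" using aH by blast
    then show "c$k = 0" unfolding c_def by (simp add: inner_axis)
  qed
  moreover have "\<forall>k. x$k = 0 \<longrightarrow> c$k > 0"
  proof (intro allI impI)
    fix k assume "x$k = 0"
    then have "axis k 1 \<in> C" unfolding C_def Z_def by (auto intro: hull_inc)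
    then have "inner a (axis k 1) < b" using ab(1) by blast
    then show "c$k > 0" unfolding c_def using b0 by (simp add: inner_axis)
  qed
  ultimately show ?thesis by blast
qed

lemma exists_w0:
  fixes x :: "real ^ 's::finite"
  assumes fin: "finite E" and nc: "NC E y" and xV: "x \<in> event_variety E y" and xnn: "\<forall>k. x$k \<ge> 0"
  shows "\<exists>w. (\<forall>e\<in>E. inner w (dv y e) = 0) \<and> (\<forall>k. x$k \<noteq> 0 \<longrightarrow> w$k = ln (x$k))"
proof -
  define Z where "Z = {k. x$k = 0}"
  define Wp where "Wp = {w :: real^'s. \<forall>e\<in>E. inner w (dv y e) = 0}"
  have sWp: "subspace Wp" unfolding Wp_def subspace_def by (auto simp: inner_add_left)
  define G where "G = span (Wp \<union> (\<lambda>k. axis k (1::real)) ` Z)"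
  define l where "l = (\<chi> k. ln (x$k))"
  have lG: "l \<in> G"
  proof (rule ccontr)
    assume "l \<notin> G"
    then have "\<exists>a b. inner a l < b \<and> (\<forall>g\<in>G. inner a g > b)"
      by (intro separating_hyperplane_closed_point) (auto simp: G_def subspace_imp_convex)
    then obtain a b where ab: "inner a l < b" "\<forall>g\<in>G. inner a g > b" by blast
    from subspace_lin_zero[OF _ ab(2)] have b0: "b < 0" and aG: "\<forall>g\<in>G. inner a g = 0"
      unfolding G_def by auto
    have aZ: "\<forall>k. x$k = 0 \<longrightarrow> a$k = 0"
    proof (intro allI impI)
      fix k assume "x$k = 0"
      then have "axis k 1 \<in> G" unfolding G_def Z_def by (auto intro: span_base)
      then have "inner a (axis k 1) = 0" using aG by blast
      then show "a$k = 0" by (simp add: inner_axis)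
    qed
    have aWp: "\<forall>w\<in>Wp. inner a w = 0" using aG unfolding G_def by (auto intro: span_base)
    obtain p z where pz: "p \<in> span (dv y ` E)" "\<And>w. w \<in> span (dv y ` E) \<Longrightarrow> orthogonal z w" "a = p + z"
      using orthogonal_subspace_decomp_exists[of "dv y ` E" a] by blast
    have "z \<in> Wp" unfolding Wp_def using pz(2) by (auto simp: orthogonal_def intro: span_base)
    then have "inner a z = 0" using aWp by blast
    moreover have "inner p z = 0" using pz(2)[OF pz(1)] by (simp add: orthogonal_def inner_commute)
    ultimately have "inner z z = 0" using pz(3) by (simp add: inner_add_left)
    then have "a = p" using pz(3) by simp
    then have aL: "a \<in> span (dv y ` E)" using pz(1) by simp
    have "inner l a = 0" using span_prop[OF fin nc xV xnn aL] aZ unfolding l_def by simp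
    then show False using ab(1) b0 by (simp add: inner_commute)
  qed
  then obtain w zz where wz: "l = w + zz" "w \<in> span Wp" "zz \<in> span ((\<lambda>k. axis k (1::real)) ` Z)"
    unfolding G_def span_Un by blast
  have wW: "w \<in> Wp" using wz(2) span_minimal[OF subset_refl sWp] by blast
  have "\<forall>k. x$k \<noteq> 0 \<longrightarrow> w$k = ln (x$k)"
  proof (intro allI impI)
    fix k assume "x$k \<noteq> 0"
    then have "zz$k = 0" using span_axis_zero[OF wz(3)] unfolding Z_def by simp
    moreover have "l$k = w$k + zz$k" using wz(1) by simp
    ultimately show "w$k = ln (x$k)" unfolding l_def by simp
  qed
  then show ?thesis using wW unfolding Wp_def by blast
qed



lemma monom_eval_expvec:
  "monom_eval a (\<chi> k. exp (f k)) = exp (\<Sum>k\<in>UNIV. real (a k) * f k)"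
  unfolding monom_eval_def exp_sum[OF finite]
  by (rule prod.cong[OF refl]) (simp add: exp_of_nat_mult)

lemma exp_seq_zero:
  assumes "(c::real) > 0"
  shows "(\<lambda>n::nat. exp (w - real n * c)) \<longlonglongrightarrow> 0"
proof -
  have eq: "exp (w - real n * c) = exp w * (inverse (exp c)) ^ n" for n
    by (simp add: exp_diff exp_of_nat_mult power_inverse divide_inverse)
  have "inverse (exp c) < 1" using assms by (simp add: inverse_less_1_iff)
  then have "(\<lambda>n. (inverse (exp c)) ^ n) \<longlonglongrightarrow> 0" by (intro LIMSEQ_power_zero) simp
  then have "(\<lambda>n. exp w * (inverse (exp c)) ^ n) \<longlonglongrightarrow> exp w * 0" by (intro tendsto_mult tendsto_const)
  then show ?thesis unfolding eq by simp
qed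

theorem lemma4p8:
  fixes n :: nat and E :: "(nat \<times> nat) set" and y :: "nat \<Rightarrow> ('s::finite \<Rightarrow> nat)"
  assumes "is_CRN n E y"
    and "weakly_reversible n E"
    and "\<not> catalytic n E y"
  shows "event_variety E y \<inter> {x. \<forall>k. x $ k \<ge> 0}
           \<subseteq> closure (event_variety E y \<inter> {x. \<forall>k. x $ k > 0})"
proof
  have fin: "finite E" using assms(1) unfolding is_CRN_def by (meson finite_SigmaI finite_atLeastAtMost finite_subset)
  have nc: "NC E y" using assms(2,3) unfolding catalytic_def NC_def by blast
  fix x assume xin: "x \<in> event_variety E y \<inter> {x. \<forall>k. x $ k \<ge> 0}"
  then have xV: "x \<in> event_variety E y" and xnn: "\<forall>k. x$k \<ge> 0" by auto
  obtain c where c: "\<forall>e\<in>E. inner c (dv y e) = 0" "\<forall>k. x$k \<noteq> 0 \<longrightarrow> c$k = 0" "\<forall>k. x$k = 0 \<longrightarrow> c$k > 0"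
    using exists_c[OF fin nc xV xnn] by blast
  obtain w where w: "\<forall>e\<in>E. inner w (dv y e) = 0" "\<forall>k. x$k \<noteq> 0 \<longrightarrow> w$k = ln (x$k)"
    using exists_w0[OF fin nc xV xnn] by blast
  define z where "z m = (\<chi> k. exp (w$k - real m * c$k))" for m :: nat
  have zin: "z m \<in> event_variety E y \<inter> {x. \<forall>k. x $ k > 0}" for m
  proof -
    have "\<forall>(i, j)\<in>E. monom_eval (y i) (z m) - monom_eval (y j) (z m) = 0"
    proof (intro ballI, clarify)
      fix i j assume e: "(i, j) \<in> E"
      have "inner (w - real m *\<^sub>R c) (dv y (i,j)) = 0" using c(1) w(1) e by (simp add: inner_diff_left)
      then have "(\<Sum>k\<in>UNIV. (w$k - real m * c$k) * (real (y i k) - real (y j k))) = 0"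
        by (simp add: inner_vec_def dv_def)
      moreover have "(\<Sum>k\<in>UNIV. (w$k - real m * c$k) * (real (y i k) - real (y j k)))
          = (\<Sum>k\<in>UNIV. real (y i k) * (w$k - real m * c$k)) - (\<Sum>k\<in>UNIV. real (y j k) * (w$k - real m * c$k))"
        unfolding sum_subtractf[symmetric] by (intro sum.cong refl) (simp add: algebra_simps)
      ultimately have "(\<Sum>k\<in>UNIV. real (y i k) * (w$k - real m * c$k)) = (\<Sum>k\<in>UNIV. real (y j k) * (w$k - real m * c$k))"
        by simp
      then show "monom_eval (y i) (z m) - monom_eval (y j) (z m) = 0"
        unfolding z_def monom_eval_expvec by simp
    qed
    then show ?thesis unfolding event_variety_def z_def by auto
  qed
  have lim: "z \<longlonglongrightarrow> x"
  proof -
    have "(\<lambda>m. \<chi> k. exp (w$k - real m * c$k)) \<longlonglongrightarrow> (\<chi> k. x$k)"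
    proof (rule tendsto_vec_lambda)
      fix k
      show "(\<lambda>m. exp (w$k - real m * c$k)) \<longlonglongrightarrow> x$k"
      proof (cases "x$k = 0")
        case True
        then show ?thesis using exp_seq_zero[of "c$k" "w$k"] c(3) by simp
      next
        case False
        then have "x$k > 0" using xnn by (simp add: less_le)
        then have "exp (w$k - real m * c$k) = x$k" for m using False c(2) w(2) by simp
        then show ?thesis by simp
      qed
    qed
    then show ?thesis unfolding z_def by simp
  qed
  show "x \<in> closure (event_variety E y \<inter> {x. \<forall>k. x $ k > 0})"
    unfolding closure_sequential using zin lim by blast
qed

end
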